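(* Let $a\in\mathbb C\setminus\{0\}$ and $b\in\mathbb C$. Then (a) $\{\widehat{\mathcal B}(a,b)_n:n\ge0\}$ is a generating set of the algebra $\mathsf{NSym}$; (b) $\{\mathrm{comm}(\widehat{\mathcal B}(a,b)_n):n\ge0\}$ is a generating set of the algebra $\mathsf{Sym}$.
   Context: $\mathsf{NSym}$ is the algebra of noncommutative symmetric functions over $\mathbb C$ (free associative on $H_1,H_2,\dots$, with $H_\beta=H_{\beta_1}\cdots H_{\beta_l}$), $\mathsf{Sym}$ the algebra of symmetric functions, and $\mathrm{comm}:\mathsf{NSym}\to\mathsf{Sym}$ the algebra homomorphism with $H_n\mapsto h_n$ (complete homogeneous symmetric function). $\widehat{\mathcal B}(a,b)_0=1$ and for $n\ge1$, $\widehat{\mathcal B}(a,b)_n=\sum_{\beta}a^{n-\ell(\beta)}b^{\ell(\beta)-1}H_\beta$, the sum over all compositions $\beta$ of $n$, with the convention $0^0=1$ ($\ell(\beta)$ the number of parts). *)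

theory Defs
  imports Complex_Main "HOL-Library.Multiset"
begin

text \<open>NSym: the free associative C-algebra on H_1, H_2, ... . An element is a finitely
supported coefficient function on words; the word [b1,...,bl] (all bi >= 1, i.e. a
composition) stands for the basis element H_b1 * ... * H_bl; the empty word is 1.\<close>

type_synonym nsym = "nat list \<Rightarrow> complex"

definition nsym_carrier :: "nsym set" where
  "nsym_carrier = {f. finite {w. f w \<noteq> 0} \<and> (\<forall>w. f w \<noteq> 0 \<longrightarrow> 0 \<notin> set w)}"

definition nsym_one :: nsym where
  "nsym_one w = (if w = [] then 1 else 0)"

definition nsym_mult :: "nsym \<Rightarrow> nsym \<Rightarrow> nsym" where
  "nsym_mult f g w = (\<Sum>i\<le>length w. f (take i w) * g (drop i w))"

definition nsym_H :: "nat list \<Rightarrow> nsym" where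
  "nsym_H \<beta> w = (if w = \<beta> then 1 else 0)"

text \<open>Sym = C[h_1,h_2,...] (polynomial algebra on the algebraically independent h_n):
finitely supported coefficient functions on multisets of positive integers; the
multiset {#l1,...,lk#} stands for the monomial h_l1 * ... * h_lk.\<close>

type_synonym sym = "nat multiset \<Rightarrow> complex"

definition sym_carrier :: "sym set" where
  "sym_carrier = {f. finite {m. f m \<noteq> 0} \<and> (\<forall>m. f m \<noteq> 0 \<longrightarrow> 0 \<notin># m)}"

definition sym_one :: sym where
  "sym_one m = (if m = {#} then 1 else 0)"

definition sym_mult :: "sym \<Rightarrow> sym \<Rightarrow> sym" where
  "sym_mult f g m = (\<Sum>u\<in>{u. u \<subseteq># m}. f u * g (m - u))"

text \<open>comm : NSym -> Sym, the algebra homomorphism with H_n |-> h_n, i.e. H_beta |-> h_beta.\<close>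
definition comm :: "nsym \<Rightarrow> sym" where
  "comm f m = (\<Sum>w\<in>{w. mset w = m}. f w)"

inductive_set gen_subalg :: "('x \<Rightarrow> complex) set \<Rightarrow> (('x \<Rightarrow> complex) \<Rightarrow> ('x \<Rightarrow> complex) \<Rightarrow> ('x \<Rightarrow> complex))
    \<Rightarrow> ('x \<Rightarrow> complex) \<Rightarrow> ('x \<Rightarrow> complex) set"
  for S mult one where
  gen: "f \<in> S \<Longrightarrow> f \<in> gen_subalg S mult one"
| unit: "one \<in> gen_subalg S mult one"
| smult: "f \<in> gen_subalg S mult one \<Longrightarrow> (\<lambda>x. c * f x) \<in> gen_subalg S mult one"
| add: "f \<in> gen_subalg S mult one \<Longrightarrow> g \<in> gen_subalg S mult one \<Longrightarrow>
          (\<lambda>x. f x + g x) \<in> gen_subalg S mult one"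
| mult: "f \<in> gen_subalg S mult one \<Longrightarrow> g \<in> gen_subalg S mult one \<Longrightarrow>
          mult f g \<in> gen_subalg S mult one"

definition is_composition :: "nat \<Rightarrow> nat list \<Rightarrow> bool" where
  "is_composition n \<beta> \<longleftrightarrow> 0 \<notin> set \<beta> \<and> sum_list \<beta> = n"

text \<open>Bhat(a,b)_0 = 1, Bhat(a,b)_n = sum over compositions beta of n of
a^(n - l(beta)) b^(l(beta) - 1) H_beta  (Isabelle: 0^0 = 1).\<close>
definition Bhat :: "complex \<Rightarrow> complex \<Rightarrow> nat \<Rightarrow> nsym" where
  "Bhat a b n = (if n = 0 then nsym_one else
     (\<lambda>w. if is_composition n w then a ^ (n - length w) * b ^ (length w - 1) else 0))"

end

theory Submission
  imports Defs
begin

lemma gen_zero: "(\<lambda>x. 0) \<in> gen_subalg S mu one"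
  using gen_subalg.smult[OF gen_subalg.unit, where c=0] by simp

lemma gen_sum:
  assumes "finite I" "\<forall>i\<in>I. e i \<in> gen_subalg S mu one"
  shows "(\<lambda>x. \<Sum>i\<in>I. c i * e i x) \<in> gen_subalg S mu one"
  using assms
proof (induction I rule: finite_induct)
  case empty
  then show ?case using gen_zero by simp
next
  case (insert i I)
  have "(\<lambda>x. c i * e i x) \<in> gen_subalg S mu one"
    using insert by (auto intro: gen_subalg.smult)
  from gen_subalg.add[OF this insert.IH] insert
  show ?case by simp
qed

lemma gen_all:
  assumes "finite {x. f x \<noteq> 0}" "\<forall>x. f x \<noteq> 0 \<longrightarrow> (\<lambda>y. if y = x then 1 else 0) \<in> gen_subalg S mu one"
  shows "f \<in> gen_subalg S mu one"
proof -
  have "(\<lambda>y. \<Sum>x\<in>{x. f x \<noteq> 0}. f x * (\<lambda>y. if y = x then 1 else 0) y) \<in> gen_subalg S mu one"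
    by (rule gen_sum) (use assms in auto)
  moreover have "(\<lambda>y. \<Sum>x\<in>{x. f x \<noteq> 0}. f x * (\<lambda>y. if y = x then 1 else 0) y) = f"
  proof
    fix y
    have "(\<Sum>x\<in>{x. f x \<noteq> 0}. f x * (if y = x then 1 else 0)) = (\<Sum>x\<in>{x. f x \<noteq> 0}. if y = x then f x else 0)"
      by (rule sum.cong) auto
    also have "\<dots> = f y" using assms(1) by (simp add: sum.delta)
    finally show "(\<Sum>x\<in>{x. f x \<noteq> 0}. f x * (\<lambda>y. if y = x then 1 else (0::complex)) y) = f y" by simp
  qed
  ultimately show ?thesis by simp
qed

lemma length_le_sum_list: "0 \<notin> set (xs::nat list) \<Longrightarrow> length xs \<le> sum_list xs"
  by (induction xs) auto

lemma finite_compositions: "finite {\<beta>. is_composition n \<beta>}"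
proof -
  have "{\<beta>. is_composition n \<beta>} \<subseteq> {xs. set xs \<subseteq> {0..n} \<and> length xs \<le> n}"
    using length_le_sum_list member_le_sum_list
    by (fastforce simp: is_composition_def)
  thus ?thesis using finite_lists_length_le[of "{0..n}" n] by (auto intro: finite_subset)
qed

lemma composition_parts:
  assumes "is_composition n \<beta>" "\<beta> \<noteq> [n]" "k \<in> set \<beta>"
  shows "0 < k \<and> k < n"
proof -
  have k0: "0 < k" using assms by (auto simp: is_composition_def intro: Nat.gr0I)
  obtain xs ys where b: "\<beta> = xs @ k # ys" using split_list[OF assms(3)] by blast
  have s: "sum_list xs + k + sum_list ys = n" using assms(1) b by (simp add: is_composition_def)
  have "k \<noteq> n"
  proof
    assume "k = n"
    with s have "sum_list xs = 0" "sum_list ys = 0" by auto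
    moreover have "0 \<notin> set xs" "0 \<notin> set ys" using assms(1) b by (auto simp: is_composition_def)
    ultimately have "xs = []" "ys = []" by (auto simp: sum_list_eq_0_iff) (metis list.set_intros(1) neq_Nil_conv)+
    with b \<open>k = n\<close> assms(2) show False by simp
  qed
  with s k0 show ?thesis by auto
qed

section \<open>NSym\<close>

lemma nsym_mult_H: "nsym_mult (nsym_H u) (nsym_H v) = nsym_H (u @ v)"
proof
  fix w
  have "nsym_mult (nsym_H u) (nsym_H v) w = (\<Sum>i\<le>length w. if i = length u \<and> w = u @ v then 1 else 0)"
    unfolding nsym_mult_def nsym_H_def
  proof (rule sum.cong)
    fix i assume i: "i \<in> {..length w}"
    have "(take i w = u \<and> drop i w = v) \<longleftrightarrow> (i = length u \<and> w = u @ v)"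
      using i by (auto simp: min_def)
    then show "(if take i w = u then 1 else 0) * (if drop i w = v then 1 else 0) =
        (if i = length u \<and> w = u @ v then 1 else (0::complex))" by auto
  qed simp
  also have "\<dots> = nsym_H (u @ v) w"
    by (cases "w = u @ v") (auto simp: nsym_H_def)
  finally show "nsym_mult (nsym_H u) (nsym_H v) w = nsym_H (u @ v) w" .
qed

lemma nsym_H_list:
  assumes "\<forall>k\<in>set \<beta>. nsym_H [k] \<in> gen_subalg S nsym_mult nsym_one"
  shows "nsym_H \<beta> \<in> gen_subalg S nsym_mult nsym_one"
  using assms
proof (induction \<beta>)
  case Nil
  have "nsym_H [] = nsym_one" by (auto simp: nsym_H_def nsym_one_def)
  then show ?case by (simp add: gen_subalg.unit)
next
  case (Cons k \<beta>)
  have "nsym_H (k # \<beta>) = nsym_mult (nsym_H [k]) (nsym_H \<beta>)" by (simp add: nsym_mult_H)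
  then show ?case using Cons by (auto intro: gen_subalg.mult)
qed

lemma nsym_H_gen:
  fixes a b :: complex
  assumes a: "a \<noteq> 0" and n: "0 < n"
  shows "nsym_H [n] \<in> gen_subalg (range (Bhat a b)) nsym_mult nsym_one"
  using n
proof (induction n rule: less_induct)
  case (less n)
  let ?G = "gen_subalg (range (Bhat a b)) nsym_mult nsym_one"
  define C where "C = {\<beta>. is_composition n \<beta>} - {[n]}"
  define c where "c = (\<lambda>\<beta>::nat list. a ^ (n - length \<beta>) * b ^ (length \<beta> - 1))"
  have fC: "finite C" unfolding C_def using finite_compositions by auto
  have "\<forall>\<beta>\<in>C. nsym_H \<beta> \<in> ?G"
  proof
    fix \<beta> assume "\<beta> \<in> C"
    then have "\<forall>k\<in>set \<beta>. 0 < k \<and> k < n" using composition_parts unfolding C_def by blast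
    then show "nsym_H \<beta> \<in> ?G" using less.IH by (auto intro: nsym_H_list)
  qed
  from gen_sum[OF fC this, of c]
  have "(\<lambda>x. \<Sum>\<beta>\<in>C. c \<beta> * nsym_H \<beta> x) \<in> ?G" .
  from gen_subalg.smult[OF this, of "-1"]
  have "(\<lambda>x. -1 * (\<Sum>\<beta>\<in>C. c \<beta> * nsym_H \<beta> x)) \<in> ?G" .
  from gen_subalg.add[OF gen_subalg.gen[of "Bhat a b n"] this]
  have "(\<lambda>x. Bhat a b n x + -1 * (\<Sum>\<beta>\<in>C. c \<beta> * nsym_H \<beta> x)) \<in> ?G" by simp
  from gen_subalg.smult[OF this, of "1 / a ^ (n - 1)"]
  have *: "(\<lambda>x. 1 / a ^ (n - 1) * (Bhat a b n x + -1 * (\<Sum>\<beta>\<in>C. c \<beta> * nsym_H \<beta> x))) \<in> ?G" .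
  have "(\<lambda>x. 1 / a ^ (n - 1) * (Bhat a b n x + -1 * (\<Sum>\<beta>\<in>C. c \<beta> * nsym_H \<beta> x))) = nsym_H [n]"
  proof
    fix x
    have s: "(\<Sum>\<beta>\<in>C. c \<beta> * nsym_H \<beta> x) = (if x \<in> C then c x else 0)"
    proof -
      have "(\<Sum>\<beta>\<in>C. c \<beta> * nsym_H \<beta> x) = (\<Sum>\<beta>\<in>C. if x = \<beta> then c \<beta> else 0)"
        by (rule sum.cong) (auto simp: nsym_H_def)
      also have "\<dots> = (if x \<in> C then c x else 0)" using fC by (simp add: sum.delta)
      finally show ?thesis .
    qed
    have B: "Bhat a b n x = (if is_composition n x then c x else 0)"
      using less.prems by (simp add: Bhat_def c_def)
    have cn: "is_composition n [n]" using less.prems by (simp add: is_composition_def)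
    show "1 / a ^ (n - 1) * (Bhat a b n x + -1 * (\<Sum>\<beta>\<in>C. c \<beta> * nsym_H \<beta> x)) = nsym_H [n] x"
      unfolding s B using a cn
      by (auto simp: C_def c_def nsym_H_def)
  qed
  with * show ?case by simp
qed

lemma nsym_carrier_sub:
  fixes a b :: complex
  assumes a: "a \<noteq> 0"
  shows "nsym_carrier \<subseteq> gen_subalg (range (Bhat a b)) nsym_mult nsym_one"
proof
  fix f assume f: "f \<in> nsym_carrier"
  show "f \<in> gen_subalg (range (Bhat a b)) nsym_mult nsym_one"
  proof (rule gen_all)
    show "finite {x. f x \<noteq> 0}" using f by (simp add: nsym_carrier_def)
    show "\<forall>x. f x \<noteq> 0 \<longrightarrow> (\<lambda>y. if y = x then 1 else 0) \<in> gen_subalg (range (Bhat a b)) nsym_mult nsym_one"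
    proof (intro allI impI)
      fix x assume "f x \<noteq> 0"
      then have "0 \<notin> set x" using f by (simp add: nsym_carrier_def)
      then have "nsym_H x \<in> gen_subalg (range (Bhat a b)) nsym_mult nsym_one"
        using nsym_H_gen[OF a] by (intro nsym_H_list) (metis gr0I)
      moreover have "nsym_H x = (\<lambda>y. if y = x then 1 else 0)" by (auto simp: nsym_H_def)
      ultimately show "(\<lambda>y. if y = x then 1 else 0) \<in> gen_subalg (range (Bhat a b)) nsym_mult nsym_one" by simp
    qed
  qed
qed

lemma nsym_mult_carrier:
  assumes f: "f \<in> nsym_carrier" and g: "g \<in> nsym_carrier"
  shows "nsym_mult f g \<in> nsym_carrier"
proof -
  let ?F = "{w. f w \<noteq> 0}" and ?G = "{w. g w \<noteq> 0}"
  have sub: "{w. nsym_mult f g w \<noteq> 0} \<subseteq> (\<lambda>(u, v). u @ v) ` (?F \<times> ?G)"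
  proof
    fix w assume "w \<in> {w. nsym_mult f g w \<noteq> 0}"
    then obtain i where "f (take i w) * g (drop i w) \<noteq> 0"
      unfolding nsym_mult_def using sum.not_neutral_contains_not_neutral by force
    then show "w \<in> (\<lambda>(u, v). u @ v) ` (?F \<times> ?G)"
      by (intro image_eqI[of _ _ "(take i w, drop i w)"]) auto
  qed
  have "finite ?F" "finite ?G" using f g by (auto simp: nsym_carrier_def)
  then have fin: "finite {w. nsym_mult f g w \<noteq> 0}"
    using sub by (meson finite_SigmaI finite_imageI finite_subset)
  have "\<forall>w. nsym_mult f g w \<noteq> 0 \<longrightarrow> 0 \<notin> set w"
  proof (intro allI impI)
    fix w assume "nsym_mult f g w \<noteq> 0"
    then have "w \<in> (\<lambda>(u, v). u @ v) ` (?F \<times> ?G)" using sub by blast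
    then show "0 \<notin> set w" using f g by (auto simp: nsym_carrier_def)
  qed
  with fin show ?thesis by (simp add: nsym_carrier_def)
qed

lemma Bhat_carrier: "Bhat a b n \<in> nsym_carrier"
proof (cases "n = 0")
  case True
  have "{w. nsym_one w \<noteq> 0} = {[]}" by (auto simp: nsym_one_def)
  then show ?thesis using True by (auto simp: Bhat_def nsym_carrier_def nsym_one_def)
next
  case False
  have "{w. Bhat a b n w \<noteq> 0} \<subseteq> {\<beta>. is_composition n \<beta>}" using False by (auto simp: Bhat_def split: if_splits)
  then show ?thesis using False finite_compositions[of n]
    by (auto simp: nsym_carrier_def Bhat_def is_composition_def intro: finite_subset split: if_splits)
qed

lemma nsym_gen_sub: "gen_subalg (range (Bhat a b)) nsym_mult nsym_one \<subseteq> nsym_carrier"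
proof
  fix f assume "f \<in> gen_subalg (range (Bhat a b)) nsym_mult nsym_one"
  then show "f \<in> nsym_carrier"
  proof (induction rule: gen_subalg.induct)
    case (gen f) then show ?case using Bhat_carrier by auto
  next
    case unit
    have "{w. nsym_one w \<noteq> 0} = {[]}" by (auto simp: nsym_one_def)
    then show ?case by (auto simp: nsym_carrier_def nsym_one_def)
  next
    case (smult f c)
    have "{x. c * f x \<noteq> 0} \<subseteq> {x. f x \<noteq> 0}" by auto
    then show ?case using smult by (auto simp: nsym_carrier_def intro: finite_subset)
  next
    case (add f g)
    have "{x. f x + g x \<noteq> 0} \<subseteq> {x. f x \<noteq> 0} \<union> {x. g x \<noteq> 0}" by auto
    then show ?case using add by (auto simp: nsym_carrier_def intro: finite_subset)
  next
    case (mult f g)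
    then show ?case using nsym_mult_carrier by blast
  qed
qed


section \<open>Sym\<close>

definition hs :: "nat multiset \<Rightarrow> sym" where
  "hs m = (\<lambda>x. if x = m then 1 else 0)"

lemma finite_submsets: "finite {u. u \<subseteq># (m::nat multiset)}"
proof -
  have "{u. u \<subseteq># m} \<subseteq> mset ` {xs. set xs \<subseteq> set_mset m \<and> length xs \<le> size m}"
  proof
    fix u assume u: "u \<in> {u. u \<subseteq># m}"
    obtain xs where xs: "mset xs = u" using ex_mset by blast
    have "set xs \<subseteq> set_mset m" using u xs by (metis mem_Collect_eq set_mset_mono set_mset_mset)
    moreover have "length xs \<le> size m" using u xs by (metis mem_Collect_eq size_mset size_mset_mono)
    ultimately show "u \<in> mset ` {xs. set xs \<subseteq> set_mset m \<and> length xs \<le> size m}" using xs by blast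
  qed
  then show ?thesis by (rule finite_subset) (intro finite_imageI finite_lists_length_le, simp)
qed

lemma sym_mult_hs: "sym_mult (hs u) (hs v) = hs (u + v)"
proof
  fix m
  have "sym_mult (hs u) (hs v) m = (\<Sum>u'\<in>{u'. u' \<subseteq># m}. if u' = u \<and> m = u + v then 1 else 0)"
    unfolding sym_mult_def hs_def
  proof (rule sum.cong)
    fix u' assume "u' \<in> {u'. u' \<subseteq># m}"
    then have "(u' = u \<and> m - u' = v) \<longleftrightarrow> (u' = u \<and> m = u + v)"
      by (auto simp: subset_mset.add_diff_inverse)
    then show "(if u' = u then 1 else 0) * (if m - u' = v then 1 else 0) =
        (if u' = u \<and> m = u + v then 1 else (0::complex))" by auto
  qed simp
  also have "\<dots> = hs (u + v) m"
    using finite_submsets[of m] by (cases "m = u + v") (auto simp: hs_def)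
  finally show "sym_mult (hs u) (hs v) m = hs (u + v) m" .
qed

lemma hs_mset:
  assumes "\<forall>k\<in>#m. hs {#k#} \<in> gen_subalg S sym_mult sym_one"
  shows "hs m \<in> gen_subalg S sym_mult sym_one"
  using assms
proof (induction m)
  case empty
  have "hs {#} = sym_one" by (auto simp: hs_def sym_one_def)
  then show ?case by (simp add: gen_subalg.unit)
next
  case (add k m)
  have "hs (add_mset k m) = sym_mult (hs {#k#}) (hs m)" by (simp add: sym_mult_hs)
  then show ?case using add by (auto intro: gen_subalg.mult)
qed

lemma comm_Bhat:
  assumes "0 < n"
  shows "comm (Bhat a b n) x = (if 0 \<notin># x \<and> sum_mset x = n then
     of_nat (card {w. mset w = x}) * (a ^ (n - size x) * b ^ (size x - 1)) else 0)"
proof -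
  have "comm (Bhat a b n) x = (\<Sum>w\<in>{w. mset w = x}.
      (if 0 \<notin># x \<and> sum_mset x = n then a ^ (n - size x) * b ^ (size x - 1) else 0))"
    unfolding comm_def
  proof (rule sum.cong)
    fix w assume "w \<in> {w. mset w = x}"
    then have w: "mset w = x" by simp
    have "is_composition n w \<longleftrightarrow> 0 \<notin># x \<and> sum_mset x = n"
      using w by (auto simp: is_composition_def sum_mset_sum_list)
    moreover have "length w = size x" using w by auto
    ultimately show "Bhat a b n w = (if 0 \<notin># x \<and> sum_mset x = n then a ^ (n - size x) * b ^ (size x - 1) else 0)"
      using assms by (simp add: Bhat_def)
  qed simp
  then show ?thesis by simp
qed

lemma finite_partitions: "finite {m. 0 \<notin># m \<and> sum_mset m = (n::nat)}"
proof -
  have "{m. 0 \<notin># m \<and> sum_mset m = n} \<subseteq> mset ` {\<beta>. is_composition n \<beta>}"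
  proof
    fix m assume m: "m \<in> {m. 0 \<notin># m \<and> sum_mset m = n}"
    obtain xs where xs: "mset xs = m" using ex_mset by blast
    then have "is_composition n xs" using m by (auto simp: is_composition_def sum_mset_sum_list)
    then show "m \<in> mset ` {\<beta>. is_composition n \<beta>}" using xs by blast
  qed
  then show ?thesis using finite_compositions by (meson finite_imageI finite_subset)
qed

lemma partition_parts:
  fixes m :: "nat multiset"
  assumes "0 \<notin># m" "sum_mset m = n" "m \<noteq> {#n#}" "k \<in># m"
  shows "0 < k \<and> k < n"
proof -
  obtain xs where xs: "mset xs = m" using ex_mset by blast
  then have "is_composition n xs" using assms by (auto simp: is_composition_def sum_mset_sum_list)
  moreover have "xs \<noteq> [n]" using xs assms(3) by auto
  moreover have "k \<in> set xs" using xs assms(4) by auto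
  ultimately show ?thesis using composition_parts by blast
qed

lemma card_single: "card {w. mset w = {#n#}} = 1"
proof -
  have "{w. mset w = {#n#}} = {[n]}" by auto
  then show ?thesis by simp
qed

lemma hs_gen:
  fixes a b :: complex
  assumes a: "a \<noteq> 0" and n: "0 < n"
  shows "hs {#n#} \<in> gen_subalg (range (\<lambda>n. comm (Bhat a b n))) sym_mult sym_one"
  using n
proof (induction n rule: less_induct)
  case (less n)
  let ?G = "gen_subalg (range (\<lambda>n. comm (Bhat a b n))) sym_mult sym_one"
  define C where "C = {m. 0 \<notin># m \<and> sum_mset m = n} - {{#n#}}"
  define c where "c = (\<lambda>x::nat multiset. of_nat (card {w. mset w = x}) * (a ^ (n - size x) * b ^ (size x - 1)))"
  have fC: "finite C" unfolding C_def using finite_partitions by auto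
  have "\<forall>m\<in>C. hs m \<in> ?G"
  proof
    fix m assume "m \<in> C"
    then have "\<forall>k\<in>#m. 0 < k \<and> k < n" using partition_parts unfolding C_def by blast
    then show "hs m \<in> ?G" using less.IH by (auto intro: hs_mset)
  qed
  from gen_sum[OF fC this, of c]
  have "(\<lambda>x. \<Sum>m\<in>C. c m * hs m x) \<in> ?G" .
  from gen_subalg.smult[OF this, of "-1"]
  have "(\<lambda>x. -1 * (\<Sum>m\<in>C. c m * hs m x)) \<in> ?G" .
  from gen_subalg.add[OF gen_subalg.gen[of "comm (Bhat a b n)"] this]
  have "(\<lambda>x. comm (Bhat a b n) x + -1 * (\<Sum>m\<in>C. c m * hs m x)) \<in> ?G" by simp
  from gen_subalg.smult[OF this, of "1 / a ^ (n - 1)"]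
  have *: "(\<lambda>x. 1 / a ^ (n - 1) * (comm (Bhat a b n) x + -1 * (\<Sum>m\<in>C. c m * hs m x))) \<in> ?G" .
  have "(\<lambda>x. 1 / a ^ (n - 1) * (comm (Bhat a b n) x + -1 * (\<Sum>m\<in>C. c m * hs m x))) = hs {#n#}"
  proof
    fix x
    have s: "(\<Sum>m\<in>C. c m * hs m x) = (if x \<in> C then c x else 0)"
    proof -
      have "(\<Sum>m\<in>C. c m * hs m x) = (\<Sum>m\<in>C. if x = m then c m else 0)"
        by (rule sum.cong) (auto simp: hs_def)
      also have "\<dots> = (if x \<in> C then c x else 0)" using fC by (simp add: sum.delta)
      finally show ?thesis .
    qed
    have B: "comm (Bhat a b n) x = (if 0 \<notin># x \<and> sum_mset x = n then c x else 0)"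
      using less.prems by (simp add: comm_Bhat c_def)
    have cn: "c {#n#} = a ^ (n - 1)" by (simp add: c_def card_single)
    show "1 / a ^ (n - 1) * (comm (Bhat a b n) x + -1 * (\<Sum>m\<in>C. c m * hs m x)) = hs {#n#} x"
      unfolding s B using a cn less.prems
      by (auto simp: C_def hs_def)
  qed
  with * show ?case by simp
qed

lemma sym_carrier_sub:
  fixes a b :: complex
  assumes a: "a \<noteq> 0"
  shows "sym_carrier \<subseteq> gen_subalg (range (\<lambda>n. comm (Bhat a b n))) sym_mult sym_one"
proof
  fix f assume f: "f \<in> sym_carrier"
  show "f \<in> gen_subalg (range (\<lambda>n. comm (Bhat a b n))) sym_mult sym_one"
  proof (rule gen_all)
    show "finite {x. f x \<noteq> 0}" using f by (simp add: sym_carrier_def)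
    show "\<forall>x. f x \<noteq> 0 \<longrightarrow> (\<lambda>y. if y = x then 1 else 0) \<in> gen_subalg (range (\<lambda>n. comm (Bhat a b n))) sym_mult sym_one"
    proof (intro allI impI)
      fix x assume "f x \<noteq> 0"
      then have "0 \<notin># x" using f by (simp add: sym_carrier_def)
      then have "hs x \<in> gen_subalg (range (\<lambda>n. comm (Bhat a b n))) sym_mult sym_one"
        using hs_gen[OF a] by (intro hs_mset) (metis gr0I)
      then show "(\<lambda>y. if y = x then 1 else 0) \<in> gen_subalg (range (\<lambda>n. comm (Bhat a b n))) sym_mult sym_one"
        by (simp add: hs_def)
    qed
  qed
qed

lemma sym_mult_carrier:
  assumes f: "f \<in> sym_carrier" and g: "g \<in> sym_carrier"
  shows "sym_mult f g \<in> sym_carrier"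
proof -
  let ?F = "{w. f w \<noteq> 0}" and ?G = "{w. g w \<noteq> 0}"
  have sub: "{w. sym_mult f g w \<noteq> 0} \<subseteq> (\<lambda>(u, v). u + v) ` (?F \<times> ?G)"
  proof
    fix w assume "w \<in> {w. sym_mult f g w \<noteq> 0}"
    then obtain u where "u \<subseteq># w" "f u * g (w - u) \<noteq> 0"
      unfolding sym_mult_def using sum.not_neutral_contains_not_neutral by force
    then show "w \<in> (\<lambda>(u, v). u + v) ` (?F \<times> ?G)"
      by (intro image_eqI[of _ _ "(u, w - u)"]) (auto simp: subset_mset.add_diff_inverse)
  qed
  have "finite ?F" "finite ?G" using f g by (auto simp: sym_carrier_def)
  then have fin: "finite {w. sym_mult f g w \<noteq> 0}"
    using sub by (meson finite_SigmaI finite_imageI finite_subset)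
  have "\<forall>w. sym_mult f g w \<noteq> 0 \<longrightarrow> 0 \<notin># w"
  proof (intro allI impI)
    fix w assume "sym_mult f g w \<noteq> 0"
    then have "w \<in> (\<lambda>(u, v). u + v) ` (?F \<times> ?G)" using sub by blast
    then show "0 \<notin># w" using f g by (auto simp: sym_carrier_def)
  qed
  with fin show ?thesis by (simp add: sym_carrier_def)
qed

lemma comm_Bhat_carrier: "comm (Bhat a b n) \<in> sym_carrier"
proof (cases "n = 0")
  case True
  have "comm (Bhat a b n) = sym_one"
  proof
    fix x
    have "comm nsym_one x = (\<Sum>w\<in>{w. mset w = x}. if w = [] then 1 else 0)"
      by (simp add: comm_def nsym_one_def)
    also have "\<dots> = sym_one x"
    proof -
      obtain xs where "mset xs = x" using ex_mset by blast
      then have "finite {w. mset w = x}" using mset_eq_finite by blast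
      then show ?thesis by (auto simp: sum.delta' sym_one_def)
    qed
    finally show "comm (Bhat a b n) x = sym_one x" using True by (simp add: Bhat_def)
  qed
  moreover have "{m. sym_one m \<noteq> 0} = {{#}}" by (auto simp: sym_one_def)
  ultimately show ?thesis by (auto simp: sym_carrier_def sym_one_def)
next
  case False
  have "{x. comm (Bhat a b n) x \<noteq> 0} \<subseteq> {m. 0 \<notin># m \<and> sum_mset m = n}"
    using False by (auto simp: comm_Bhat split: if_splits)
  then show ?thesis using finite_partitions[of n]
    by (auto simp: sym_carrier_def intro: finite_subset)
qed

lemma sym_gen_sub: "gen_subalg (range (\<lambda>n. comm (Bhat a b n))) sym_mult sym_one \<subseteq> sym_carrier"
proof
  fix f assume "f \<in> gen_subalg (range (\<lambda>n. comm (Bhat a b n))) sym_mult sym_one"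
  then show "f \<in> sym_carrier"
  proof (induction rule: gen_subalg.induct)
    case (gen f) then show ?case using comm_Bhat_carrier by auto
  next
    case unit
    have "{w. sym_one w \<noteq> 0} = {{#}}" by (auto simp: sym_one_def)
    then show ?case by (auto simp: sym_carrier_def sym_one_def)
  next
    case (smult f c)
    have "{x. c * f x \<noteq> 0} \<subseteq> {x. f x \<noteq> 0}" by auto
    then show ?case using smult by (auto simp: sym_carrier_def intro: finite_subset)
  next
    case (add f g)
    have "{x. f x + g x \<noteq> 0} \<subseteq> {x. f x \<noteq> 0} \<union> {x. g x \<noteq> 0}" by auto
    then show ?case using add by (auto simp: sym_carrier_def intro: finite_subset)
  next
    case (mult f g)
    then show ?case using sym_mult_carrier by blast
  qed
qed

theorem corollary4p11:
  fixes a b :: complex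
  assumes "a \<noteq> 0"
  shows "gen_subalg (range (Bhat a b)) nsym_mult nsym_one = nsym_carrier
       \<and> gen_subalg (range (\<lambda>n. comm (Bhat a b n))) sym_mult sym_one = sym_carrier"
  using nsym_gen_sub nsym_carrier_sub[OF assms] sym_gen_sub sym_carrier_sub[OF assms] by blast

end
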